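(* Let ${\rm H}>0$, ${\rm K}>0$ and set \[ R^{({\rm H},{\rm K})}(s,t)=2^{-{\rm K}}\Bigl(\bigl(|s|^{2{\rm H}}+|t|^{2{\rm H}}\bigr)^{{\rm K}}-|t-s|^{2{\rm H}{\rm K}}\Bigr). \] (a) If there exists a centered Gaussian process $(B(t))_{t\in\mathbb{R}}$ with covariance $R^{({\rm H},{\rm K})}(s,t)$, $s,t\in\mathbb{R}$, then $(2{\rm H}-1){\rm K}\le 1$, i.e. ${\rm K}\le \frac{1}{2{\rm H}-1}$ whenever ${\rm H}>\tfrac12$. (b) If there exists a centered Gaussian process $(B(t))_{t\ge 0}$ with covariance $R^{({\rm H},{\rm K})}(s,t)$, $s,t\ge 0$, then ${\rm K}\le \widehat{{\rm K}}({\rm H})$, where \[ \widehat{{\rm K}}({\rm H}):=\sup\Bigl\{{\rm K}'>0:\ \sup_{\tau>0}\Bigl(\bigl(\cosh({\rm H}\tau)\bigr)^{{\rm K}'}-2^{(2{\rm H}-1){\rm K}'}\bigl|\sinh(\tau/2)\bigr|^{2{\rm H}{\rm K}'}\Bigr)\le 1\Bigr\}. \] Moreover, $\widehat{{\rm K}}({\rm H})<{\rm H}^{-1}$ for every ${\rm H}>1$. *)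

theory Defs
  imports "HOL-Probability.Probability"
begin

definition bifrac_cov :: "real \<Rightarrow> real \<Rightarrow> real \<Rightarrow> real \<Rightarrow> real" where
  "bifrac_cov H K s t =
     2 powr (- K) * ((\<bar>s\<bar> powr (2 * H) + \<bar>t\<bar> powr (2 * H)) powr K - \<bar>t - s\<bar> powr (2 * H * K))"

definition centered_gaussian_rv :: "'a measure \<Rightarrow> ('a \<Rightarrow> real) \<Rightarrow> real \<Rightarrow> bool" where
  "centered_gaussian_rv M Y v \<longleftrightarrow>
     Y \<in> borel_measurable M \<and>
     ((v = 0 \<and> (AE \<omega> in M. Y \<omega> = 0)) \<or>
      (v > 0 \<and> distributed M lborel Y (normal_density 0 (sqrt v))))"

definition centered_gaussian_process ::
    "'a measure \<Rightarrow> real set \<Rightarrow> (real \<Rightarrow> 'a \<Rightarrow> real) \<Rightarrow> (real \<Rightarrow> real \<Rightarrow> real) \<Rightarrow> bool" where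
  "centered_gaussian_process M T X R \<longleftrightarrow>
     prob_space M \<and>
     (\<forall>t\<in>T. X t \<in> borel_measurable M) \<and>
     (\<forall>S c. finite S \<and> S \<subseteq> T \<longrightarrow>
        centered_gaussian_rv M (\<lambda>\<omega>. \<Sum>t\<in>S. c t * X t \<omega>)
          (\<Sum>s\<in>S. \<Sum>t\<in>S. c s * c t * R s t))"

text \<open>\<open>\<widehat>K(H)\<close>, valued in the extended reals (it may a priori be +\<infinity>).\<close>
definition K_hat :: "real \<Rightarrow> ereal" where
  "K_hat H = Sup (ereal ` {K'. K' > 0 \<and>
      (SUP \<tau>\<in>{0<..}. ereal (cosh (H * \<tau>) powr K'
                         - 2 powr ((2 * H - 1) * K') * \<bar>sinh (\<tau> / 2)\<bar> powr (2 * H * K'))) \<le> 1})"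

end

theory Submission
  imports Defs
begin

lemma cgp_psd:
  assumes "centered_gaussian_process M T X R" "finite S" "S \<subseteq> T"
  shows "0 \<le> (\<Sum>s\<in>S. \<Sum>t\<in>S. c s * c t * R s t)"
proof -
  have "\<forall>S c. finite S \<and> S \<subseteq> T \<longrightarrow>
        centered_gaussian_rv M (\<lambda>\<omega>. \<Sum>t\<in>S. c t * X t \<omega>) (\<Sum>s\<in>S. \<Sum>t\<in>S. c s * c t * R s t)"
    using assms(1) unfolding centered_gaussian_process_def by blast
  hence "centered_gaussian_rv M (\<lambda>\<omega>. \<Sum>t\<in>S. c t * X t \<omega>) (\<Sum>s\<in>S. \<Sum>t\<in>S. c s * c t * R s t)"
    using assms(2,3) by blast
  thus ?thesis unfolding centered_gaussian_rv_def by auto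
qed

lemma partA:
  assumes "H > 0" "K > 0" "centered_gaussian_process M UNIV X (bifrac_cov H K)"
  shows "(2 * H - 1) * K \<le> 1"
proof -
  have 0: "0 \<le> (\<Sum>s\<in>{-1,1::real}. \<Sum>t\<in>{-1,1}. (\<lambda>_. 1::real) s * (\<lambda>_. 1) t * bifrac_cov H K s t)"
    using cgp_psd[OF assms(3), of "{-1,1}" "\<lambda>_. 1"] by simp
  have e: "(2::real) powr (-K) * 2 powr K = 1" by (simp add: powr_add[symmetric])
  have e2: "(2::real) powr (-K) * 2 powr (2*H*K) = 2 powr ((2*H-1)*K)" 
    by (simp add: powr_add[symmetric] algebra_simps)
  have r1: "bifrac_cov H K 1 1 = 1" "bifrac_cov H K (-1) (-1) = 1"
    unfolding bifrac_cov_def using e by simp_all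
  have r2: "bifrac_cov H K (-1) 1 = 1 - 2 powr ((2*H-1)*K)" "bifrac_cov H K 1 (-1) = 1 - 2 powr ((2*H-1)*K)"
    unfolding bifrac_cov_def using e e2 by (simp_all add: right_diff_distrib)
  have ne: "(-1::real) \<noteq> 1" by simp
  have "(\<Sum>s\<in>{-1,1::real}. \<Sum>t\<in>{-1,1}. (\<lambda>_. 1::real) s * (\<lambda>_. 1) t * bifrac_cov H K s t)
     = bifrac_cov H K (-1) (-1) + bifrac_cov H K (-1) 1 + (bifrac_cov H K 1 (-1) + bifrac_cov H K 1 1)"
    using ne by simp
  hence le2: "2 powr ((2*H-1)*K) \<le> (2::real)" using 0 unfolding r1 r2 by linarith
  show ?thesis
  proof (rule ccontr)
    assume "\<not> (2 * H - 1) * K \<le> 1"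
    hence "(2::real) powr 1 < 2 powr ((2*H-1)*K)" by (intro powr_less_mono) auto
    thus False using le2 by simp
  qed
qed

lemma partB_point:
  assumes "H > 0" "K > 0" "centered_gaussian_process M {0..} X (bifrac_cov H K)" "\<tau> > 0"
  shows "cosh (H * \<tau>) powr K - 2 powr ((2 * H - 1) * K) * \<bar>sinh (\<tau> / 2)\<bar> powr (2 * H * K) \<le> 1"
proof -
  define u where "u = \<tau> / 2"
  have u: "u > 0" using assms(4) u_def by simp
  define s where "s = exp (-u)"
  define t where "t = exp u"
  have st: "s \<noteq> t" using u by (simp add: s_def t_def)
  define c where "c = (\<lambda>x. if x = s then exp (H*K*u) else - exp (-(H*K*u)))"
  have 0: "0 \<le> (\<Sum>x\<in>{s,t}. \<Sum>y\<in>{s,t}. c x * c y * bifrac_cov H K x y)"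
    by (rule cgp_psd[OF assms(3)]) (auto simp: s_def t_def)
  have e: "(2::real) powr (-K) * 2 powr K = 1" by (simp add: powr_add[symmetric])
  have ss: "bifrac_cov H K s s = exp (-(2*H*K*u))"
  proof -
    have "\<bar>s\<bar> powr (2*H) = exp (-(2*H*u))" by (simp add: s_def powr_def)
    moreover have "(2 * exp (-(2*H*u))) powr K = 2 powr K * exp (-(2*H*K*u))"
      by (subst powr_mult) (auto simp: powr_def algebra_simps)
    ultimately have "(\<bar>s\<bar> powr (2*H) + \<bar>s\<bar> powr (2*H)) powr K = 2 powr K * exp (-(2*H*K*u))"
      by simp
    thus ?thesis unfolding bifrac_cov_def using e by (simp add: mult.assoc[symmetric])
  qed
  have tt: "bifrac_cov H K t t = exp (2*H*K*u)"
  proof -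
    have "\<bar>t\<bar> powr (2*H) = exp (2*H*u)" by (simp add: t_def powr_def)
    moreover have "(2 * exp (2*H*u)) powr K = 2 powr K * exp (2*H*K*u)"
      by (subst powr_mult) (auto simp: powr_def algebra_simps)
    ultimately have "(\<bar>t\<bar> powr (2*H) + \<bar>t\<bar> powr (2*H)) powr K = 2 powr K * exp (2*H*K*u)"
      by simp
    thus ?thesis unfolding bifrac_cov_def using e by (simp add: mult.assoc[symmetric])
  qed
  have sym: "bifrac_cov H K t s = bifrac_cov H K s t"
    unfolding bifrac_cov_def by (simp add: abs_minus_commute add.commute)
  have cs: "c s = exp (H*K*u)" "c t = - exp (-(H*K*u))" using st by (auto simp: c_def)
  have "0 \<le> c s * c s * exp (-(2*H*K*u)) + c t * c t * exp (2*H*K*u) + 2 * c s * c t * bifrac_cov H K s t"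
    using 0 st ss tt sym by (simp add: algebra_simps)
  also have "\<dots> = 2 - 2 * bifrac_cov H K s t"
    unfolding cs by (simp add: exp_add[symmetric] algebra_simps exp_minus_inverse)
  finally have le: "bifrac_cov H K s t \<le> 1" by simp
  have a1: "\<bar>s\<bar> powr (2*H) + \<bar>t\<bar> powr (2*H) = 2 * cosh (H * \<tau>)"
    by (simp add: s_def t_def powr_def cosh_def u_def algebra_simps)
  have "sinh (\<tau> / 2) = (t - s) / 2"
    by (simp add: s_def t_def sinh_def u_def field_simps)
  hence a2: "\<bar>t - s\<bar> = 2 * \<bar>sinh (\<tau> / 2)\<bar>" by simp
  have "bifrac_cov H K s t = 2 powr (-K) * ((2 * cosh (H * \<tau>)) powr K - (2 * \<bar>sinh (\<tau> / 2)\<bar>) powr (2*H*K))"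
    unfolding bifrac_cov_def a1 a2 ..
  also have "\<dots> = cosh (H * \<tau>) powr K - 2 powr ((2 * H - 1) * K) * \<bar>sinh (\<tau> / 2)\<bar> powr (2 * H * K)"
  proof -
    have m1: "(2 * cosh (H * \<tau>)) powr K = 2 powr K * cosh (H * \<tau>) powr K"
      by (simp add: powr_mult)
    have m2: "(2 * \<bar>sinh (\<tau> / 2)\<bar>) powr (2*H*K) = 2 powr (2*H*K) * \<bar>sinh (\<tau> / 2)\<bar> powr (2*H*K)"
      by (simp add: powr_mult)
    have e2: "(2::real) powr (-K) * 2 powr (2*H*K) = 2 powr ((2*H-1)*K)"
      by (simp add: powr_add[symmetric] algebra_simps)
    have ring: "\<And>a b c d X Y::real. a * (b * X - c * Y) = (a * b) * X - (a * c) * Y"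
      by (simp add: algebra_simps)
    show ?thesis unfolding m1 m2 ring e e2 by simp
  qed
  finally show ?thesis using le by simp
qed

lemma powr_bern:
  fixes x p :: real
  assumes "0 < x" "x < 1" "p \<ge> 0"
  shows "x powr p \<le> 1 / (1 + p * (1 - x))"
proof -
  have "x powr p = exp (p * ln x)" using assms by (simp add: powr_def)
  also have "\<dots> \<le> exp (- (p * (1 - x)))"
  proof -
    have "p * ln x \<le> p * (x - 1)" using ln_le_minus_one[of x] assms by (intro mult_left_mono) auto
    thus ?thesis by (simp add: algebra_simps)
  qed
  also have "\<dots> = 1 / exp (p * (1 - x))" by (simp add: exp_minus inverse_eq_divide)
  also have "\<dots> \<le> 1 / (1 + p * (1 - x))"
  proof -
    have q: "0 \<le> p * (1 - x)" using assms by simp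
    hence "0 < 1 + p * (1 - x)" by simp
    hence "0 < exp (p * (1 - x)) * (1 + p * (1 - x))" by simp
    thus ?thesis using exp_ge_add_one_self[of "p * (1 - x)"] by (intro divide_left_mono) auto
  qed
  finally show ?thesis .
qed

lemma f_lower:
  fixes H K a :: real
  assumes "H > 0" "K > 0" "a > 1"
  shows "cosh (H * ln a) powr K - 2 powr ((2 * H - 1) * K) * \<bar>sinh (ln a / 2)\<bar> powr (2 * H * K)
         \<ge> 2 powr (-K) * a powr (H * K) * (2 * H * K / (a + 2 * H * K))"
proof -
  define p where "p = 2 * H * K"
  have p: "p > 0" using assms by (simp add: p_def)
  have c1: "cosh (H * ln a) \<ge> a powr H / 2"
    using assms by (simp add: cosh_def powr_def)
  have c2: "cosh (H * ln a) powr K \<ge> (a powr H / 2) powr K"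
    using c1 assms by (intro powr_mono2) auto
  have c3: "(a powr H / 2) powr K = 2 powr (-K) * a powr (H * K)"
  proof -
    have "(a powr H / 2) powr K = (a powr H) powr K / 2 powr K"
      using assms by (simp add: powr_divide)
    also have "\<dots> = a powr (H * K) / 2 powr K" by (simp add: powr_powr)
    also have "\<dots> = 2 powr (-K) * a powr (H * K)" by (simp add: powr_minus divide_inverse)
    finally show ?thesis .
  qed
  define r where "r = sqrt a"
  have r: "r > 0" "r * r = a" using assms by (simp_all add: r_def)
  have "a powr (1/2) = exp (ln a / 2)" using assms unfolding powr_def by simp
  hence rp: "r = exp (ln a / 2)"
    using powr_half_sqrt[of a] assms by (simp add: r_def)
  have er1: "exp (ln a / 2) = r" by (simp only: rp)
  have er2: "exp (- (ln a / 2)) = 1 / r" unfolding rp by (simp only: exp_minus inverse_eq_divide)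
  note er = er1 er2
  define x where "x = 1 - 1 / a"
  have x: "0 < x" "x < 1" using assms by (simp_all add: x_def)
  have sh: "sinh (ln a / 2) = r * x / 2"
  proof -
    have "sinh (ln a / 2) = (r - 1 / r) / 2" unfolding sinh_def er by simp
    also have "\<dots> = r * x / 2" unfolding x_def r(2)[symmetric] using r(1) by (simp add: field_simps)
    finally show ?thesis .
  qed
  have s2: "\<bar>sinh (ln a / 2)\<bar> powr p = a powr (H * K) * x powr p * 2 powr (- p)"
  proof -
    have "\<bar>sinh (ln a / 2)\<bar> = r * x / 2" unfolding sh using r(1) x by simp
    hence "\<bar>sinh (ln a / 2)\<bar> powr p = (r * x / 2) powr p" by (simp only:)
    also have "\<dots> = r powr p * x powr p / 2 powr p"
      using r x by (simp add: powr_divide powr_mult)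
    also have "\<dots> = a powr (H * K) * x powr p * 2 powr (- p)"
    proof -
      have "r powr p = (a powr (1/2)) powr p" using assms by (simp add: r_def powr_half_sqrt)
      also have "\<dots> = a powr (H * K)" by (simp add: powr_powr p_def)
      finally have rp2: "r powr p = a powr (H * K)" .
      show ?thesis unfolding rp2 by (simp add: powr_minus divide_inverse)
    qed
    finally show ?thesis .
  qed
  have two: "2 powr ((2 * H - 1) * K) * 2 powr (- p) = 2 powr (-K)"
    by (simp add: powr_add[symmetric] p_def algebra_simps)
  have xb: "x powr p \<le> a / (a + p)"
  proof -
    have "x powr p \<le> 1 / (1 + p * (1 - x))" using powr_bern[OF x] p by simp
    also have "\<dots> = a / (a + p)" using assms by (simp add: x_def field_simps)
    finally show ?thesis .
  qed
  have A: "a powr (H * K) > 0" using assms by simp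
  have "2 powr ((2 * H - 1) * K) * \<bar>sinh (ln a / 2)\<bar> powr p = 2 powr (-K) * a powr (H * K) * x powr p"
    unfolding s2 using two by (simp add: algebra_simps)
  also have "\<dots> \<le> 2 powr (-K) * a powr (H * K) * (a / (a + p))"
    using xb A by (intro mult_left_mono) auto
  finally have s3: "2 powr ((2 * H - 1) * K) * \<bar>sinh (ln a / 2)\<bar> powr p \<le> 2 powr (-K) * a powr (H * K) * (a / (a + p))" .
  have "2 powr (-K) * a powr (H * K) * (p / (a + p)) = 2 powr (-K) * a powr (H * K) - 2 powr (-K) * a powr (H * K) * (a / (a + p))"
    using p assms by (simp add: field_simps)
  thus ?thesis using c2 c3 s3 unfolding p_def by linarith
qed

lemma large_a:
  fixes H k :: real
  assumes "H > 0" "k > 0" "H * k > 1"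
  shows "\<exists>a>1. 2 powr (-k) * a powr (H * k) * (2 * H * k / (a + 2 * H * k)) > 1"
proof -
  define p where "p = 2 * H * k"
  define e where "e = H * k - 1"
  define B where "B = 2 powr (k + 1) / p + 1"
  define a where "a = max (max p 2) (B powr (1 / e))"
  have p: "p > 0" using assms by (simp add: p_def)
  have e: "e > 0" using assms by (simp add: e_def)
  have B: "B > 0" using p by (simp add: B_def add_pos_pos)
  have a1: "a \<ge> p" "a \<ge> 2" "a \<ge> B powr (1 / e)" by (simp_all add: a_def)
  have apos: "a > 0" using a1 by simp
  have ae: "a powr e \<ge> B"
  proof -
    have "(B powr (1 / e)) powr e \<le> a powr e" using a1 e B by (intro powr_mono2) auto
    thus ?thesis using e B by (simp add: powr_powr)
  qed
  have hk: "a powr (H * k) = a * a powr e"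
  proof -
    have "a powr (H * k) = a powr (1 + e)" by (simp add: e_def)
    also have "\<dots> = a * a powr e" using apos by (simp add: powr_add)
    finally show ?thesis .
  qed
  have f1: "p / (a + p) \<ge> p / (2 * a)"
    using p a1 apos by (intro divide_left_mono) auto
  have t2: "2 powr (-k) > 0" by simp
  have "2 powr (-k) * a powr (H * k) * (p / (a + p)) \<ge> 2 powr (-k) * (a * B) * (p / (2 * a))"
    unfolding hk using f1 ae apos p t2 B
    by (intro mult_mono mult_left_mono) (auto intro: mult_nonneg_nonneg)
  also have "2 powr (-k) * (a * B) * (p / (2 * a)) = 2 powr (-k) * B * p / 2"
    using apos by (simp add: field_simps)
  also have "2 powr (-k) * B * p / 2 = 1 + 2 powr (-k) * p / 2"
  proof -
    have "2 powr (-k) * 2 powr (k + 1) = 2" by (simp add: powr_add[symmetric])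
    thus ?thesis using p by (simp add: B_def field_simps)
  qed
  finally have "2 powr (-k) * a powr (H * k) * (p / (a + p)) > 1"
    using p t2 by (smt (verit) divide_pos_pos mult_pos_pos)
  thus ?thesis using a1 unfolding p_def by (intro exI[of _ a]) auto
qed

lemma Khat_member:
  assumes "H > 0" "k \<in> {K'. K' > 0 \<and>
      (SUP \<tau>\<in>{0<..}. ereal (cosh (H * \<tau>) powr K'
                         - 2 powr ((2 * H - 1) * K') * \<bar>sinh (\<tau> / 2)\<bar> powr (2 * H * K'))) \<le> 1}"
    "a > 1"
  shows "2 powr (-k) * a powr (H * k) * (2 * H * k / (a + 2 * H * k)) \<le> 1"
proof -
  have k: "k > 0" using assms(2) by simp
  define F where "F = (\<lambda>\<tau>. ereal (cosh (H * \<tau>) powr k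
                         - 2 powr ((2 * H - 1) * k) * \<bar>sinh (\<tau> / 2)\<bar> powr (2 * H * k)))"
  have S: "(SUP \<tau>\<in>{0<..}. F \<tau>) \<le> 1" using assms(2) by (simp add: F_def)
  have "F (ln a) \<le> (SUP \<tau>\<in>{0<..}. F \<tau>)" by (rule SUP_upper) (use assms(3) in simp)
  hence "F (ln a) \<le> 1" using S by simp
  hence "ereal (cosh (H * ln a) powr k - 2 powr ((2 * H - 1) * k) * \<bar>sinh (ln a / 2)\<bar> powr (2 * H * k)) \<le> 1"
    by (simp add: F_def)
  hence "cosh (H * ln a) powr k - 2 powr ((2 * H - 1) * k) * \<bar>sinh (ln a / 2)\<bar> powr (2 * H * k) \<le> 1"
    by simp
  thus ?thesis using f_lower[OF assms(1) k assms(3)] by linarith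
qed

lemma partC:
  fixes H :: real
  assumes "H > 1"
  shows "K_hat H < ereal (1 / H)"
proof -
  have H0: "H > 0" using assms by simp
  define q where "q = 2 powr (1 - 1 / H)"
  have q: "q > 1" using assms by (simp add: q_def)
  define A where "A = 2 / (q - 1) + 2"
  have A: "A > 1" using q by (simp add: A_def add_pos_nonneg)
  define g where "g = (\<lambda>k. 2 powr (-k) * A powr (H * k) * (2 * H * k / (A + 2 * H * k)) - 1)"
  have gc: "isCont g (1 / H)" unfolding g_def using A H0
    by (intro continuous_intros) (auto intro: add_pos_nonneg)
  have "2 powr (- (1 / H)) * 2 = q" by (simp add: q_def powr_diff powr_minus field_simps)
  hence "g (1 / H) = q * A / (A + 2) - 1" using H0 A by (simp add: g_def field_simps)
  moreover have "q * A > A + 2"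
  proof -
    have "(q - 1) * A = 2 + 2 * (q - 1)" using q by (simp add: A_def field_simps)
    thus ?thesis using q by (simp add: algebra_simps)
  qed
  ultimately have g0: "g (1 / H) > 0" using A by (simp add: less_divide_eq)
  obtain r where r: "r > 0" "\<And>x. x \<noteq> 1 / H \<and> \<bar>1 / H - x\<bar> < r \<Longrightarrow> 0 < g x"
    using LIM_fun_gt_zero[OF gc[unfolded isCont_def] g0] by blast
  have bound: "k \<le> 1 / H - r / 2" if kin: "k \<in> {K'. K' > 0 \<and>
      (SUP \<tau>\<in>{0<..}. ereal (cosh (H * \<tau>) powr K'
                         - 2 powr ((2 * H - 1) * K') * \<bar>sinh (\<tau> / 2)\<bar> powr (2 * H * K'))) \<le> 1}" for k
  proof (rule ccontr)
    assume nk: "\<not> k \<le> 1 / H - r / 2"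
    have k0: "k > 0" using kin by simp
    show False
    proof (cases "H * k > 1")
      case True
      then obtain a where "a > 1" "2 powr (-k) * a powr (H * k) * (2 * H * k / (a + 2 * H * k)) > 1"
        using large_a[OF H0 k0] by blast
      thus False using Khat_member[OF H0 kin] by force
    next
      case False
      hence "k \<le> 1 / H" using H0 by (simp add: field_simps)
      hence "g k > 0" using nk r g0 by (cases "k = 1 / H") auto
      thus False using Khat_member[OF H0 kin A] by (simp add: g_def)
    qed
  qed
  have "K_hat H \<le> ereal (1 / H - r / 2)"
    unfolding K_hat_def by (rule SUP_least) (use bound in auto)
  also have "\<dots> < ereal (1 / H)" using r by simp
  finally show ?thesis .
qed

theorem proposition3p2:
  fixes H K :: real
  assumes "H > 0" and "K > 0"
  shows "((\<exists>(M :: 'a measure) X. centered_gaussian_process M UNIV X (bifrac_cov H K))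
           \<longrightarrow> (2 * H - 1) * K \<le> 1)
         \<and> ((\<exists>(M :: 'b measure) X. centered_gaussian_process M {0..} X (bifrac_cov H K))
           \<longrightarrow> ereal K \<le> K_hat H)
         \<and> (\<forall>H'. H' > 1 \<longrightarrow> K_hat H' < ereal (1 / H'))"
proof (intro conjI impI allI)
  assume "\<exists>(M :: 'a measure) X. centered_gaussian_process M UNIV X (bifrac_cov H K)"
  then obtain M :: "'a measure" and X where "centered_gaussian_process M UNIV X (bifrac_cov H K)" by blast
  thus "(2 * H - 1) * K \<le> 1" by (rule partA[OF assms])
next
  assume "\<exists>(M :: 'b measure) X. centered_gaussian_process M {0..} X (bifrac_cov H K)"
  then obtain M :: "'b measure" and X where P: "centered_gaussian_process M {0..} X (bifrac_cov H K)" by blast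
  have "(SUP \<tau>\<in>{0<..}. ereal (cosh (H * \<tau>) powr K
                         - 2 powr ((2 * H - 1) * K) * \<bar>sinh (\<tau> / 2)\<bar> powr (2 * H * K))) \<le> 1"
    by (rule SUP_least) (use partB_point[OF assms P] in simp)
  hence "K \<in> {K'. K' > 0 \<and>
      (SUP \<tau>\<in>{0<..}. ereal (cosh (H * \<tau>) powr K'
                         - 2 powr ((2 * H - 1) * K') * \<bar>sinh (\<tau> / 2)\<bar> powr (2 * H * K'))) \<le> 1}"
    using assms(2) by (rule_tac CollectI) (rule conjI)
  thus "ereal K \<le> K_hat H" unfolding K_hat_def by (rule Sup_upper[OF imageI])
next
  fix H' :: real assume "H' > 1"
  thus "K_hat H' < ereal (1 / H')" by (rule partC)
qed

end
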